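(* Under the model below, suppose in addition that all packets are transmitted by MPGPS in increasing order of their GPS departure times (i.e. no packet arrives too late to be served in that order). Then for every batch $h$ and every packet index $k$ in that batch, $$\hat d_h^k - d_h^k \le \frac{(M-1)L}{Nr}.$$
   Context: Model. There are $K$ users (sessions) with separate FIFO queues, and $N$ servers (subcarriers), each transmitting $r$ bits per unit time, so the total service rate is $Nr$. All packets have the same length $L$ bits. Transmissions are error free. The same packet arrival sequence is fed to two systems. GPS (generalized processor sharing): a fluid system of total rate $Nr$; each user $k$ has a weight $\phi_k>0$, and at every instant each backlogged user $k$ is served at rate $Nr\,\phi_k/\sum_{j\in B}\phi_j$, where $B$ is the set of currently backlogged users. A packet's GPS departure time is the time its last bit is served in GPS. MPGPS (multi-server packetized GPS) with parameter $M\ge 1$: it is work conserving (servers are never idle while packets are queued). Whenever the servers become idle at a time $\tau$, among all packets queued at $\tau$ it selects the $\min\big(M,\sum_{k}\hat Q_k(\tau)\big)$ packets that would be the first to complete service in the corresponding GPS system if no further packets arrived after $\tau$ ($\hat Q_k(\tau)$ is the number of user-$k$ packets queued under MPGPS at $\tau$). These selected packets form one batch; a batch of $M_h$ packets is transmitted jointly over all $N$ servers, occupies the servers for $M_hL/(Nr)$ time units, and all its packets depart at the end of that period. Batches are indexed $h=1,2,\dots$; $f_h^k$ denotes the $k$-th packet of batch $h$, $\hat d_h^k$ its departure time under MPGPS, and $d_h^k$ its departure time under GPS. *)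

theory Defs
  imports Complex_Main
begin

text \<open>Users are indexed by k < K. User k has n k packets, its i-th packet (i < n k, FIFO
order) arrives at time a k i. All packets have length L bits. Time starts at 0.\<close>

definition packets :: "nat \<Rightarrow> (nat \<Rightarrow> nat) \<Rightarrow> (nat \<times> nat) set" where
  "packets K n = {(k, i). k < K \<and> i < n k}"

definition cum_arr :: "real \<Rightarrow> (nat \<Rightarrow> nat) \<Rightarrow> (nat \<Rightarrow> nat \<Rightarrow> real) \<Rightarrow> nat \<Rightarrow> real \<Rightarrow> real" where
  "cum_arr L n a k t = L * real (card {i. i < n k \<and> a k i \<le> t})"

text \<open>Backlogged users at time t under the fluid service trajectory S (S k t = bits of
user k served by time t).\<close>
definition backlogged ::
  "nat \<Rightarrow> real \<Rightarrow> (nat \<Rightarrow> nat) \<Rightarrow> (nat \<Rightarrow> nat \<Rightarrow> real) \<Rightarrow> (nat \<Rightarrow> real \<Rightarrow> real) \<Rightarrow> real \<Rightarrow> nat set" where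
  "backlogged K L n a S t = {j. j < K \<and> S j t < cum_arr L n a j t}"

definition gps_rate :: "(nat \<Rightarrow> real) \<Rightarrow> real \<Rightarrow> nat set \<Rightarrow> nat \<Rightarrow> real" where
  "gps_rate phi R B k = (if k \<in> B then R * phi k / (\<Sum>j\<in>B. phi j) else 0)"

definition is_gps ::
  "nat \<Rightarrow> (nat \<Rightarrow> real) \<Rightarrow> real \<Rightarrow> real \<Rightarrow> (nat \<Rightarrow> nat) \<Rightarrow> (nat \<Rightarrow> nat \<Rightarrow> real)
   \<Rightarrow> (nat \<Rightarrow> real \<Rightarrow> real) \<Rightarrow> bool" where
  "is_gps K phi R L n a S \<longleftrightarrow>
     (\<forall>k<K. S k 0 = 0 \<and> continuous_on {0..} (S k) \<and>
        (\<forall>t\<ge>0. S k t \<le> cum_arr L n a k t \<and>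
           (S k has_real_derivative gps_rate phi R (backlogged K L n a S t) k) (at_right t)))"

definition gps_dep :: "(nat \<Rightarrow> real \<Rightarrow> real) \<Rightarrow> real \<Rightarrow> nat \<Rightarrow> nat \<Rightarrow> real" where
  "gps_dep S L k i = Inf {t. 0 \<le> t \<and> real (Suc i) * L \<le> S k t}"

definition trunc :: "(nat \<Rightarrow> nat \<Rightarrow> real) \<Rightarrow> (nat \<Rightarrow> nat) \<Rightarrow> real \<Rightarrow> nat \<Rightarrow> nat" where
  "trunc a n tau = (\<lambda>k. card {i. i < n k \<and> a k i \<le> tau})"

text \<open>MPGPS schedule: batches h = 1..H, batch h is the set of packets (k,i) in it and
starts at time tau h. gps maps an arrival count function to the GPS trajectory
(with the fixed arrival times a); it is used for the virtual GPS system in which no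
packet arrives after tau h.\<close>
definition mpgps_dep :: "nat \<Rightarrow> real \<Rightarrow> real \<Rightarrow> (nat \<Rightarrow> (nat \<times> nat) set) \<Rightarrow> (nat \<Rightarrow> real) \<Rightarrow> nat \<Rightarrow> real" where
  "mpgps_dep N r L batch tau h = tau h + real (card (batch h)) * L / (real N * r)"

definition is_mpgps ::
  "nat \<Rightarrow> nat \<Rightarrow> nat \<Rightarrow> real \<Rightarrow> real \<Rightarrow> (nat \<Rightarrow> nat) \<Rightarrow> (nat \<Rightarrow> nat \<Rightarrow> real)
   \<Rightarrow> ((nat \<Rightarrow> nat) \<Rightarrow> nat \<Rightarrow> real \<Rightarrow> real) \<Rightarrow> nat \<Rightarrow> (nat \<Rightarrow> (nat \<times> nat) set) \<Rightarrow> (nat \<Rightarrow> real) \<Rightarrow> bool" where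
  "is_mpgps K M N r L n a gps H batch tau \<longleftrightarrow>
     (let P = packets K n;
          arr = (\<lambda>(k, i). a k i);
          served = (\<lambda>h. \<Union> (batch ` {1..<h}));
          Q = (\<lambda>h. {p \<in> P. arr p \<le> tau h} - served h);
          vdep = (\<lambda>h (k, i). gps_dep (gps (trunc a n (tau h))) L k i)
      in (\<Union> (batch ` {1..H})) = P
       \<and> (\<forall>h\<in>{1..H}. \<forall>h'\<in>{1..H}. h \<noteq> h' \<longrightarrow> batch h \<inter> batch h' = {})
       \<and> (P \<noteq> {} \<longrightarrow> tau 1 = Min (arr ` P))
       \<and> (\<forall>h\<in>{1..H}. batch h \<noteq> {} \<and> batch h \<subseteq> Q h \<and> card (batch h) = min M (card (Q h)))
       \<and> (\<forall>h\<in>{1..H}. \<forall>p\<in>batch h. \<forall>q\<in>Q h - batch h. vdep h p \<le> vdep h q)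
       \<and> (\<forall>h\<in>{1..<H}. tau (Suc h) =
             max (mpgps_dep N r L batch tau h) (Min (arr ` (P - served (Suc h))))))"

end

theory Submission
  imports Defs "HOL-Analysis.Analysis"
begin

lemma right_mvt_le:
  fixes f f' :: "real \<Rightarrow> real"
  assumes ab: "a \<le> b" and cont: "continuous_on {a..b} f"
    and der: "\<And>t. a \<le> t \<Longrightarrow> t < b \<Longrightarrow> (f has_real_derivative f' t) (at_right t)"
    and bnd: "\<And>t. a \<le> t \<Longrightarrow> t < b \<Longrightarrow> f' t \<le> C"
  shows "f b - f a \<le> C * (b - a)"
proof -
  have key: "f b - f a \<le> (C + e) * (b - a)" if e: "e > 0" for e
  proof -
    define g where "g t = f t - f a - (C+e)*(t-a)" for t
    define A where "A = {t \<in> {a..b}. \<forall>u\<in>{a..t}. g u \<le> 0}"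
    have aA: "a \<in> A" using ab by (simp add: A_def g_def)
    have bdd: "bdd_above A" unfolding A_def by (rule bdd_aboveI[of _ b]) auto
    define s where "s = Sup A"
    have as: "a \<le> s" unfolding s_def using aA bdd by (rule cSup_upper)
    have sb: "s \<le> b" unfolding s_def using aA by (intro cSup_least) (auto simp: A_def)
    have cont_g: "continuous_on {a..b} g" unfolding g_def
      by (intro continuous_intros cont)
    have "closed ({a..b} \<inter> g -` {..0})"
      by (rule continuous_closed_preimage[OF cont_g]) auto
    moreover have "A \<subseteq> {a..b} \<inter> g -` {..0}" by (auto simp: A_def)
    ultimately have "closure A \<subseteq> {a..b} \<inter> g -` {..0}" by (rule closure_minimal[rotated])
    moreover have "s \<in> closure A" unfolding s_def using aA bdd by (intro closure_contains_Sup) auto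
    ultimately have gs: "g s \<le> 0" by auto
    have sA: "s \<in> A"
    proof -
      have "g u \<le> 0" if "u \<in> {a..s}" for u
      proof (cases "u < s")
        case True
        then obtain t where "t \<in> A" "u < t" using aA bdd unfolding s_def
          using less_cSupD[of A u] by blast
        then show ?thesis using that by (auto simp: A_def)
      next
        case False
        then show ?thesis using that gs by auto
      qed
      then show ?thesis using as sb by (auto simp: A_def)
    qed
    have "s = b"
    proof (rule ccontr)
      assume "s \<noteq> b"
      then have sb': "s < b" using sb by auto
      have dg: "(g has_real_derivative (f' s - (C+e))) (at_right s)"
        unfolding g_def
        by (auto intro!: derivative_eq_intros der[OF as sb'])
      have "f' s - (C + e) < 0" using bnd[OF as sb'] e by auto
      from dg have "((\<lambda>y. (g y - g s) / (y - s)) \<longlongrightarrow> f' s - (C+e)) (at_right s)"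
        by (simp add: has_field_derivative_iff)
      from order_tendstoD(2)[OF this \<open>f' s - (C + e) < 0\<close>]
      obtain c where c: "c > s" "\<And>y. y > s \<Longrightarrow> y < c \<Longrightarrow> (g y - g s) / (y - s) < 0"
        unfolding eventually_at_right_field by blast
      define t where "t = s + (min c b - s) / 2"
      have ts: "s < t" "t < c" "t \<le> b" using c(1) sb' unfolding t_def min_def by (auto simp: field_simps split: if_splits)
      have "t \<in> A"
      proof -
        have "g u \<le> 0" if "u \<in> {a..t}" for u
        proof (cases "u \<le> s")
          case True
          then show ?thesis using sA that by (auto simp: A_def)
        next
          case False
          then have "(g u - g s) / (u - s) < 0" using c(2)[of u] that ts by auto
          then have "g u - g s < 0" using False by (simp add: divide_less_0_iff)
          then show ?thesis using gs by auto
        qed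
        then show ?thesis using ts as by (auto simp: A_def)
      qed
      then have "t \<le> s" unfolding s_def using bdd by (rule cSup_upper)
      then show False using ts by auto
    qed
    then show ?thesis using sA by (auto simp: A_def g_def)
  qed
  show ?thesis
  proof (cases "a = b")
    case True then show ?thesis by simp
  next
    case False
    then have ba: "b - a > 0" using ab by auto
    show ?thesis
    proof (rule field_le_epsilon)
      fix e :: real assume "e > 0"
      then have "f b - f a \<le> (C + e / (b - a)) * (b - a)" using ba by (intro key) auto
      also have "\<dots> = C * (b - a) + e" using ba by (simp add: field_simps)
      finally show "f b - f a \<le> C * (b - a) + e" .
    qed
  qed
qed

lemma right_mvt_ge:
  fixes f f' :: "real \<Rightarrow> real"
  assumes ab: "a \<le> b" and cont: "continuous_on {a..b} f"
    and der: "\<And>t. a \<le> t \<Longrightarrow> t < b \<Longrightarrow> (f has_real_derivative f' t) (at_right t)"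
    and bnd: "\<And>t. a \<le> t \<Longrightarrow> t < b \<Longrightarrow> f' t \<ge> C"
  shows "f b - f a \<ge> C * (b - a)"
proof -
  have "(\<lambda>t. - f t) b - (\<lambda>t. - f t) a \<le> (- C) * (b - a)"
    by (rule right_mvt_le[where f'="\<lambda>t. - f' t"]) (use assms in \<open>auto intro!: derivative_eq_intros continuous_intros\<close>)
  then show ?thesis by simp
qed

lemma gps_rate_nonneg:
  assumes "\<forall>j<K. phi j > 0" "R \<ge> 0" "B \<subseteq> {..<K}"
  shows "gps_rate phi R B j \<ge> 0"
proof (cases "j \<in> B")
  case True
  have "finite B" using assms(3) finite_subset by blast
  then have "(\<Sum>x\<in>B. phi x) > 0" using True assms
    by (intro sum_pos) auto
  then show ?thesis using True assms by (auto simp: gps_rate_def)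
qed (simp add: gps_rate_def)

lemma gps_rate_sum_le:
  assumes "\<forall>j<K. phi j > 0" "R \<ge> 0" "B \<subseteq> {..<K}" "U \<subseteq> {..<K}"
  shows "(\<Sum>j\<in>U. gps_rate phi R B j) \<le> R"
proof (cases "B = {}")
  case True then show ?thesis using assms by (simp add: gps_rate_def)
next
  case False
  have fB: "finite B" using assms(3) finite_subset by blast
  have fU: "finite U" using assms(4) finite_subset by blast
  have pos: "(\<Sum>x\<in>B. phi x) > 0" using False fB assms by (intro sum_pos) auto
  have "(\<Sum>j\<in>U. gps_rate phi R B j) = (\<Sum>j\<in>U \<inter> B. R * phi j / (\<Sum>x\<in>B. phi x))"
    using fU by (simp add: gps_rate_def sum.If_cases Int_def)
  also have "\<dots> = R * (\<Sum>j\<in>U \<inter> B. phi j) / (\<Sum>x\<in>B. phi x)"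
    by (simp add: sum_divide_distrib sum_distrib_left)
  also have "(\<Sum>j\<in>U \<inter> B. phi j) \<le> (\<Sum>x\<in>B. phi x)"
    using fB assms by (intro sum_mono2) (auto simp: less_imp_le)
  then have "R * (\<Sum>j\<in>U \<inter> B. phi j) / (\<Sum>x\<in>B. phi x) \<le> R"
    using pos assms(2) by (simp add: divide_le_eq mult_left_mono)
  finally show ?thesis .
qed

lemma backlogged_sub: "backlogged K L n a S t \<subseteq> {..<K}"
  by (auto simp: backlogged_def)

lemma gps_mono:
  assumes gps: "is_gps K phi R L n a S" and phi: "\<forall>j<K. phi j > 0" and R: "R \<ge> 0"
    and j: "j < K" and t: "0 \<le> t1" "t1 \<le> t2"
  shows "S j t1 \<le> S j t2"
proof -
  have cont: "continuous_on {0..} (S j)" and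
    der: "\<And>t. t \<ge> 0 \<Longrightarrow> (S j has_real_derivative gps_rate phi R (backlogged K L n a S t) j) (at_right t)"
    using gps j by (auto simp: is_gps_def)
  have "S j t2 - S j t1 \<ge> 0 * (t2 - t1)"
    by (rule right_mvt_ge[where f'="\<lambda>t. gps_rate phi R (backlogged K L n a S t) j"])
       (use t in \<open>auto intro: der continuous_on_subset[OF cont] gps_rate_nonneg[OF phi R backlogged_sub]\<close>)
  then show ?thesis by simp
qed

lemma gps_sum_le:
  assumes gps: "is_gps K phi R L n a S" and phi: "\<forall>j<K. phi j > 0" and R: "R \<ge> 0"
    and U: "U \<subseteq> {..<K}" and t: "0 \<le> t1" "t1 \<le> t2"
  shows "(\<Sum>j\<in>U. S j t2 - S j t1) \<le> R * (t2 - t1)"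
proof -
  have cont: "\<And>j. j \<in> U \<Longrightarrow> continuous_on {0..} (S j)" and
    der: "\<And>t j. j \<in> U \<Longrightarrow> t \<ge> 0 \<Longrightarrow> (S j has_real_derivative gps_rate phi R (backlogged K L n a S t) j) (at_right t)"
    using gps U by (auto simp: is_gps_def)
  have "(\<lambda>t. \<Sum>j\<in>U. S j t) t2 - (\<lambda>t. \<Sum>j\<in>U. S j t) t1 \<le> R * (t2 - t1)"
  proof (rule right_mvt_le[where f'="\<lambda>t. \<Sum>j\<in>U. gps_rate phi R (backlogged K L n a S t) j"])
    show "continuous_on {t1..t2} (\<lambda>t. \<Sum>j\<in>U. S j t)"
      by (intro continuous_intros continuous_on_subset[OF cont]) (use t in auto)
    show "((\<lambda>t. \<Sum>j\<in>U. S j t) has_real_derivative (\<Sum>j\<in>U. gps_rate phi R (backlogged K L n a S t) j)) (at_right t)"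
      if "t1 \<le> t" for t
      by (rule DERIV_sum) (use der that t in auto)
    show "(\<Sum>j\<in>U. gps_rate phi R (backlogged K L n a S t) j) \<le> R" for t
      by (rule gps_rate_sum_le[OF phi R backlogged_sub U])
  qed (use t in auto)
  then show ?thesis by (simp add: sum_subtractf)
qed

lemma gps_le_before:
  assumes gps: "is_gps K phi R L n a S" and L: "L \<ge> 0" and j: "j < K" and t: "0 \<le> t"
  shows "S j t \<le> L * card {m. m < n j \<and> a j m < t}"
proof (cases "t = 0")
  case True
  then show ?thesis using gps j L by (auto simp: is_gps_def)
next
  case False
  then have tpos: "t > 0" using t by auto
  define c where "c = card {m. m < n j \<and> a j m < t}"
  define A where "A = insert 0 ((a j) ` {m. m < n j \<and> a j m < t})"
  have fA: "finite A" by (auto simp: A_def)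
  define t0 where "t0 = Max A"
  have t0: "t0 < t" "0 \<le> t0" using fA tpos by (auto simp: t0_def A_def)
  have le: "S j t' \<le> L * c" if "t0 < t'" "t' < t" for t'
  proof -
    have "{m. m < n j \<and> a j m \<le> t'} = {m. m < n j \<and> a j m < t}"
    proof safe
      fix m assume "m < n j" "a j m < t"
      then have "a j m \<in> A" by (auto simp: A_def)
      then have "a j m \<le> t0" using fA by (auto simp: t0_def)
      then show "a j m \<le> t'" using that by auto
    qed (use that in auto)
    moreover have "S j t' \<le> cum_arr L n a j t'" using gps j that t0 by (auto simp: is_gps_def)
    ultimately show ?thesis by (simp add: cum_arr_def c_def)
  qed
  have "continuous (at t) (S j)"
    using gps j tpos by (intro continuous_on_interior[of "{0..}"]) (auto simp: is_gps_def)
  then have "(S j \<longlongrightarrow> S j t) (at_left t)"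
    using tendsto_within_subset[of "S j" "nhds (S j t)" t UNIV "{..<t}"] by (simp add: continuous_at)
  then have "S j t \<le> L * c"
    by (rule tendsto_upperbound) (use le t0 in \<open>auto simp: eventually_at_left_field\<close>)
  then show ?thesis by (simp add: c_def)
qed

lemma gps_dep_served:
  assumes gps: "is_gps K phi R L n a S" and j: "j < K"
    and ne: "\<exists>t\<ge>0. real (Suc m) * L \<le> S j t"
  shows "real (Suc m) * L \<le> S j (gps_dep S L j m) \<and> 0 \<le> gps_dep S L j m"
proof -
  have cont: "continuous_on {0..} (S j)" using gps j by (auto simp: is_gps_def)
  define Z where "Z = {t. 0 \<le> t \<and> real (Suc m) * L \<le> S j t}"
  have "Z = {0..} \<inter> S j -` {real (Suc m) * L..}" by (auto simp: Z_def)
  moreover have "closed ({0..} \<inter> S j -` {real (Suc m) * L..})"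
    by (rule continuous_closed_preimage[OF cont]) auto
  ultimately have "closed Z" by simp
  moreover have "Z \<noteq> {}" using ne by (auto simp: Z_def)
  moreover have "bdd_below Z" by (rule bdd_belowI[of _ 0]) (auto simp: Z_def)
  ultimately have "Inf Z \<in> Z" by (intro closed_contains_Inf)
  then show ?thesis by (simp add: Z_def gps_dep_def)
qed

lemma gps_live:
  assumes gps: "is_gps K phi R L n a S" and phi: "\<forall>j<K. phi j > 0" and R: "R > 0" and L: "L > 0"
    and a0: "\<forall>j<K. \<forall>m<n j. 0 \<le> a j m"
    and amono: "\<forall>j<K. \<forall>m m'. m \<le> m' \<and> m' < n j \<longrightarrow> a j m \<le> a j m'"
    and j: "j < K" and m: "m < n j"
  shows "\<exists>t\<ge>0. real (Suc m) * L \<le> S j t"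
proof (rule ccontr)
  assume "\<not> ?thesis"
  then have lt: "\<And>t. t \<ge> 0 \<Longrightarrow> S j t < real (Suc m) * L" by force
  define t0 where "t0 = a j m"
  have t00: "t0 \<ge> 0" using a0 j m by (auto simp: t0_def)
  define Phi where "Phi = (\<Sum>x\<in>{..<K}. phi x)"
  have Phipos: "Phi > 0" unfolding Phi_def using j phi by (intro sum_pos) auto
  define c where "c = R * phi j / Phi"
  have cpos: "c > 0" using R phi j Phipos by (auto simp: c_def)
  have rate: "gps_rate phi R (backlogged K L n a S t) j \<ge> c" if "t \<ge> t0" for t
  proof -
    have "{..m} \<subseteq> {i. i < n j \<and> a j i \<le> t}"
      using amono j m that by (auto simp: t0_def) (meson order.trans)
    then have "card {..m} \<le> card {i. i < n j \<and> a j i \<le> t}"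
      by (intro card_mono) auto
    then have "real (Suc m) * L \<le> cum_arr L n a j t"
      using L by (simp add: cum_arr_def)
    moreover have "S j t < real (Suc m) * L" using lt that t00 by auto
    ultimately have jB: "j \<in> backlogged K L n a S t" using j by (auto simp: backlogged_def)
    define B where "B = backlogged K L n a S t"
    have fB: "finite B" using backlogged_sub[of K L n a S t] finite_subset by (auto simp: B_def)
    have pos: "(\<Sum>x\<in>B. phi x) > 0" using jB fB phi backlogged_sub[of K L n a S t]
      by (intro sum_pos) (auto simp: B_def)
    have "(\<Sum>x\<in>B. phi x) \<le> Phi" unfolding Phi_def using backlogged_sub[of K L n a S t] phi
      by (intro sum_mono2) (auto simp: B_def less_imp_le)
    then have "R * phi j / Phi \<le> R * phi j / (\<Sum>x\<in>B. phi x)"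
      using pos R phi j by (intro divide_left_mono) auto
    then show ?thesis using jB by (simp add: gps_rate_def c_def B_def)
  qed
  define t1 where "t1 = t0 + real (Suc m) * L / c"
  have t01: "t0 \<le> t1" using cpos L by (simp add: t1_def)
  have cont: "continuous_on {0..} (S j)" and
    der: "\<And>t. t \<ge> 0 \<Longrightarrow> (S j has_real_derivative gps_rate phi R (backlogged K L n a S t) j) (at_right t)"
    using gps j by (auto simp: is_gps_def)
  have "S j t1 - S j t0 \<ge> c * (t1 - t0)"
    by (rule right_mvt_ge[where f'="\<lambda>t. gps_rate phi R (backlogged K L n a S t) j"])
       (use t01 t00 in \<open>auto intro: der continuous_on_subset[OF cont] rate\<close>)
  moreover have "c * (t1 - t0) = real (Suc m) * L" using cpos by (simp add: t1_def)
  moreover have "S j t0 \<ge> 0"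
    using gps_mono[OF gps phi _ j order_refl t00] R gps j by (auto simp: is_gps_def)
  ultimately have "S j t1 \<ge> real (Suc m) * L" by linarith
  then show False using lt[of t1] t01 t00 by auto
qed

theorem theorem2:
  fixes K M N H :: nat and r L :: real and phi :: "nat \<Rightarrow> real"
    and n :: "nat \<Rightarrow> nat" and a :: "nat \<Rightarrow> nat \<Rightarrow> real"
    and gps :: "(nat \<Rightarrow> nat) \<Rightarrow> nat \<Rightarrow> real \<Rightarrow> real"
    and batch :: "nat \<Rightarrow> (nat \<times> nat) set" and tau :: "nat \<Rightarrow> real"
    and h k i :: nat
  assumes "M \<ge> 1" and "N \<ge> 1" and "r > 0" and "L > 0"
    and "\<forall>j<K. phi j > 0"
    and "\<forall>j<K. \<forall>m<n j. 0 \<le> a j m"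
    and "\<forall>j<K. \<forall>m m'. m \<le> m' \<and> m' < n j \<longrightarrow> a j m \<le> a j m'"
    and "\<forall>n'. (\<forall>j. n' j \<le> n j) \<longrightarrow> is_gps K phi (real N * r) L n' a (gps n')"
    and "is_mpgps K M N r L n a gps H batch tau"
    and "\<forall>g\<in>{1..H}. \<forall>g'\<in>{1..H}. g < g' \<longrightarrow>
           (\<forall>(j, m)\<in>batch g. \<forall>(j', m')\<in>batch g'.
              gps_dep (gps n) L j m \<le> gps_dep (gps n) L j' m')"
    and "h \<in> {1..H}" and "(k, i) \<in> batch h"
  shows "mpgps_dep N r L batch tau h - gps_dep (gps n) L k i \<le> (real M - 1) * L / (real N * r)"
proof -
  note A = assms
  define R where "R = real N * r"
  have R: "R > 0" using A(2,3) by (simp add: R_def)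
  define S where "S = gps n"
  have gps: "is_gps K phi R L n a S" using A(8) by (auto simp: R_def S_def)
  define P where "P = packets K n"
  define arr where "arr = (\<lambda>(k::nat, i::nat). a k i)"
  define served where "served = (\<lambda>h. \<Union> (batch ` {1..<h}))"
  define D where "D = mpgps_dep N r L batch tau"
  have Dd: "D g = tau g + real (card (batch g)) * L / R" for g
    by (simp add: D_def mpgps_dep_def R_def)
  have fP: "finite P" unfolding P_def packets_def
    by (rule finite_subset[of _ "{..<K} \<times> {..<Max (insert 0 (n ` {..<K}))}"])
       (auto simp: less_le_trans[OF _ Max_ge])
  from A(9) have
    F1: "\<Union> (batch ` {1..H}) = P" and
    F2: "\<forall>h\<in>{1..H}. \<forall>h'\<in>{1..H}. h \<noteq> h' \<longrightarrow> batch h \<inter> batch h' = {}" and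
    F3: "P \<noteq> {} \<longrightarrow> tau 1 = Min (arr ` P)" and
    F4: "\<forall>h\<in>{1..H}. batch h \<noteq> {} \<and> batch h \<subseteq> {p \<in> P. arr p \<le> tau h} - served h
            \<and> card (batch h) = min M (card ({p \<in> P. arr p \<le> tau h} - served h))" and
    F6: "\<forall>h\<in>{1..<H}. tau (Suc h) = max (D h) (Min (arr ` (P - served (Suc h))))"
    unfolding is_mpgps_def Let_def P_def[symmetric] arr_def[symmetric] served_def[symmetric]
      D_def[symmetric] by blast+
  have bP: "batch g \<subseteq> P" if "g \<in> {1..H}" for g using F4 that by blast
  have fb: "finite (batch g)" if "g \<in> {1..H}" for g using bP[OF that] fP finite_subset by blast
  have cardM: "card (batch h) \<le> M" using F4 A(11) by auto
  have hH: "1 \<le> h" "h \<le> H" using A(11) by auto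
  have pP: "(k, i) \<in> P" using bP[OF A(11)] A(12) by auto
  then have kK: "k < K" and "i < n k" by (auto simp: P_def packets_def)
  have Pq: "fst q < K \<and> snd q < n (fst q)" if "q \<in> P" for q
    using that by (auto simp: P_def packets_def)
  \<comment> \<open>start of the busy period\<close>
  define G where "G = {g \<in> {1..h}. g = 1 \<or> tau g \<noteq> D (g - 1)}"
  define g0 where "g0 = Max G"
  have fG: "finite G" by (simp add: G_def)
  have "1 \<in> G" using hH by (auto simp: G_def)
  then have g0G: "g0 \<in> G" using fG unfolding g0_def by (intro Max_in) auto
  then have g0h: "1 \<le> g0" "g0 \<le> h" by (auto simp: G_def)
  have notG: "tau g = D (g - 1)" if "g0 < g" "g \<le> h" for g
  proof (rule ccontr)
    assume "tau g \<noteq> D (g - 1)"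
    then have "g \<in> G" using that g0h by (auto simp: G_def)
    then have "g \<le> g0" using fG by (simp add: g0_def)
    then show False using that by auto
  qed
  define tau0 where "tau0 = tau g0"
  have Dsum: "D (g0 + d) = tau0 + real (\<Sum>x\<in>{g0..g0+d}. card (batch x)) * L / R"
    if "g0 + d \<le> h" for d
    using that
  proof (induction d)
    case 0
    then show ?case by (simp add: Dd tau0_def)
  next
    case (Suc d)
    have "D (g0 + Suc d) = D (g0 + d) + real (card (batch (g0 + Suc d))) * L / R"
      using notG[of "g0 + Suc d"] Suc.prems by (simp add: Dd)
    also have "\<dots> = tau0 + real (\<Sum>x\<in>{g0..g0+Suc d}. card (batch x)) * L / R"
      using Suc by (simp add: add_divide_distrib distrib_right)
    finally show ?case .
  qed
  have Dh: "D h = tau0 + (real (\<Sum>x\<in>{g0..<h}. card (batch x)) + real (card (batch h))) * L / R"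
  proof -
    have "D h = D (g0 + (h - g0))" using g0h by simp
    also have "\<dots> = tau0 + real (\<Sum>x\<in>{g0..h}. card (batch x)) * L / R"
      using Dsum[of "h - g0"] g0h by simp
    also have "(\<Sum>x\<in>{g0..h}. card (batch x)) = (\<Sum>x\<in>{g0..<h}. card (batch x)) + card (batch h)"
      using g0h by (simp add: sum.last_plus)
    finally show ?thesis by simp
  qed
  have tau0_min: "tau0 = Min (arr ` (P - served g0))"
  proof (cases "g0 = 1")
    case True
    have "served 1 = {}" by (simp add: served_def)
    then show ?thesis using F3 pP True by (auto simp: tau0_def)
  next
    case False
    have "tau g0 \<noteq> D (g0 - 1)" using g0G False by (auto simp: G_def)
    moreover have "tau g0 = max (D (g0 - 1)) (Min (arr ` (P - served g0)))"
    proof -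
      have "g0 - 1 \<in> {1..<H}" using False g0h hH by auto
      then have "tau (Suc (g0 - 1)) = max (D (g0 - 1)) (Min (arr ` (P - served (Suc (g0 - 1)))))"
        using F6 by blast
      moreover have "Suc (g0 - 1) = g0" using g0h by auto
      ultimately show ?thesis by simp
    qed
    ultimately show ?thesis by (auto simp: max_def tau0_def split: if_splits)
  qed
  have inPs: "q \<in> P - served g0" if "g \<in> {g0..h}" "q \<in> batch g" for g q
  proof -
    have "q \<in> P" using bP[of g] that g0h hH by auto
    moreover have "q \<notin> served g0"
    proof
      assume "q \<in> served g0"
      then obtain g' where "g' \<in> {1..<g0}" "q \<in> batch g'" by (auto simp: served_def)
      moreover have "g' \<noteq> g" "g' \<in> {1..H}" "g \<in> {1..H}" using calculation that g0h hH by auto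
      ultimately show False using F2 that by blast
    qed
    ultimately show ?thesis by auto
  qed
  have fPs: "finite (arr ` (P - served g0))" using fP by auto
  have arr_ge: "tau0 \<le> arr q" if "g \<in> {g0..h}" "q \<in> batch g" for g q
    using inPs[OF that] tau0_min fPs by auto
  have tau0_nn: "0 \<le> tau0"
  proof -
    have "(k, i) \<in> P - served g0" using inPs[of h] A(12) g0h by auto
    then have "tau0 \<in> arr ` (P - served g0)" unfolding tau0_min using fPs by (intro Min_in) auto
    then obtain q where "q \<in> P" "tau0 = arr q" by auto
    then show ?thesis using A(6) Pq[of q] by (auto simp: arr_def split: prod.splits)
  qed
  define T where "T = gps_dep S L k i"
  define X where "X = insert (k, i) (\<Union> (batch ` {g0..<h}))"
  have XP: "X \<subseteq> P"
  proof -
    have "batch g \<subseteq> P" if "g \<in> {g0..<h}" for g using bP[of g] that g0h hH by auto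
    then show ?thesis using pP unfolding X_def by blast
  qed
  have fX: "finite X" using XP fP finite_subset by blast
  have X_arr: "tau0 \<le> a j m" if jm: "(j, m) \<in> X" for j m
  proof (cases "(j, m) = (k, i)")
    case True
    then show ?thesis using arr_ge[of h "(k, i)"] A(12) g0h by (auto simp: arr_def)
  next
    case False
    then obtain g where g: "g \<in> {g0..<h}" "(j, m) \<in> batch g" using jm False by (auto simp: X_def)
    then have "g \<in> {g0..h}" by auto
    from arr_ge[OF this g(2)] show ?thesis by (simp add: arr_def)
  qed
  have X_dep: "gps_dep S L j m \<le> T" if jm: "(j, m) \<in> X" for j m
  proof (cases "(j, m) = (k, i)")
    case True then show ?thesis by (simp add: T_def)
  next
    case False
    then obtain g where g: "g \<in> {g0..<h}" "(j, m) \<in> batch g" using jm False by (auto simp: X_def)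
    then have "g \<in> {1..H}" "g < h" using g0h hH by auto
    then show ?thesis using A(10) A(11) A(12) g(2) unfolding T_def S_def by fastforce
  qed
  have pnot: "(k, i) \<notin> \<Union> (batch ` {g0..<h})"
  proof
    assume "(k, i) \<in> \<Union> (batch ` {g0..<h})"
    then obtain g where "g \<in> {g0..<h}" "(k, i) \<in> batch g" by auto
    moreover have "g \<noteq> h" "g \<in> {1..H}" using calculation g0h hH by auto
    ultimately show False using F2 A(11,12) by blast
  qed
  have cardX: "card X = Suc (\<Sum>x\<in>{g0..<h}. card (batch x))"
  proof -
    have "card (\<Union> (batch ` {g0..<h})) = (\<Sum>x\<in>{g0..<h}. card (batch x))"
    proof (rule card_UN_disjoint)
      show "\<forall>x\<in>{g0..<h}. finite (batch x)" using fb g0h hH by auto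
      show "\<forall>x\<in>{g0..<h}. \<forall>y\<in>{g0..<h}. x \<noteq> y \<longrightarrow> batch x \<inter> batch y = {}"
        using F2 g0h hH by auto
    qed simp
    moreover have "finite (\<Union> (batch ` {g0..<h}))" using fX by (simp add: X_def)
    ultimately show ?thesis using pnot by (simp add: X_def)
  qed
  have XK: "j < K \<and> m < n j" if "(j, m) \<in> X" for j m using Pq[of "(j, m)"] that XP by auto
  have served: "real (Suc m) * L \<le> S j (gps_dep S L j m) \<and> 0 \<le> gps_dep S L j m" if "(j, m) \<in> X" for j m
    using XK[OF that] by (intro gps_dep_served[OF gps] gps_live[OF gps A(5) R A(4) A(6) A(7)]) auto
  define cnt where "cnt j = card {m. m < n j \<and> a j m < tau0}" for j
  have cnt_le: "cnt j \<le> m" if "(j, m) \<in> X" for j m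
  proof -
    have "{m'. m' < n j \<and> a j m' < tau0} \<subseteq> {..<m}"
    proof safe
      fix m' assume m': "m' < n j" "a j m' < tau0"
      show "m' < m"
      proof (rule ccontr)
        assume "\<not> m' < m"
        then have "a j m \<le> a j m'" using A(7) XK[OF that] m' by auto
        then show False using X_arr[OF that] m' by auto
      qed
    qed
    then show ?thesis unfolding cnt_def by (metis card_lessThan card_mono finite_lessThan)
  qed
  have Sbefore: "S j tau0 \<le> L * cnt j" if "j < K" for j
    using gps_le_before[OF gps _ that tau0_nn] A(4) by (simp add: cnt_def)
  have ST: "real (Suc m) * L \<le> S j T" if "(j, m) \<in> X" for j m
  proof -
    have "S j (gps_dep S L j m) \<le> S j T"
      using served[OF that] X_dep[OF that] XK[OF that] R
      by (intro gps_mono[OF gps A(5)]) auto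
    then show ?thesis using served[OF that] by linarith
  qed
  have pX: "(k, i) \<in> X" by (simp add: X_def)
  have Tge: "tau0 \<le> T"
  proof (rule ccontr)
    assume "\<not> tau0 \<le> T"
    moreover have "0 \<le> T" using served[OF pX] by (simp add: T_def)
    ultimately have "S k T \<le> S k tau0" using kK R by (intro gps_mono[OF gps A(5)]) auto
    also have "\<dots> \<le> L * cnt k" using Sbefore kK by auto
    also have "\<dots> \<le> L * i" using cnt_le[OF pX] A(4) by auto
    finally show False using ST[OF pX] A(4) by (simp add: algebra_simps)
  qed
  define U where "U = fst ` X"
  define Xj where "Xj j = {m. (j, m) \<in> X}" for j
  have XSig: "X = Sigma U Xj" by (auto simp: U_def Xj_def image_iff) force
  have fU: "finite U" using fX by (simp add: U_def)
  have fXj: "finite (Xj j)" for j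
  proof (rule finite_subset)
    show "Xj j \<subseteq> snd ` X" by (force simp: Xj_def)
  qed (use fX in auto)
  have per: "real (card (Xj j)) * L \<le> S j T - S j tau0" if "j \<in> U" for j
  proof -
    have ne: "Xj j \<noteq> {}" using that by (auto simp: U_def Xj_def)
    define ms where "ms = Max (Xj j)"
    have msX: "(j, ms) \<in> X" using Max_in[OF fXj ne] by (simp add: ms_def Xj_def)
    have "Xj j \<subseteq> {cnt j..ms}" using cnt_le fXj by (auto simp: Xj_def ms_def)
    then have "card (Xj j) \<le> card {cnt j..ms}" by (intro card_mono) auto
    then have "card (Xj j) \<le> Suc ms - cnt j" by simp
    moreover have "cnt j \<le> Suc ms" using cnt_le[OF msX] by simp
    ultimately have "real (card (Xj j)) \<le> real (Suc ms) - real (cnt j)" by linarith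
    then have "real (card (Xj j)) * L \<le> real (Suc ms) * L - L * real (cnt j)"
    proof -
      have "real (card (Xj j)) * L \<le> (real (Suc ms) - real (cnt j)) * L"
        using A(4) \<open>real (card (Xj j)) \<le> real (Suc ms) - real (cnt j)\<close> by (intro mult_right_mono) auto
      then show ?thesis by (simp add: algebra_simps)
    qed
    also have "\<dots> \<le> S j T - S j tau0" using ST[OF msX] Sbefore[of j] XK[OF msX] by linarith
    finally show ?thesis .
  qed
  have "real (card X) * L = (\<Sum>j\<in>U. real (card (Xj j)) * L)"
    unfolding XSig using fU fXj by (simp add: sum_distrib_right)
  also have "\<dots> \<le> (\<Sum>j\<in>U. S j T - S j tau0)" by (intro sum_mono per)
  also have "\<dots> \<le> R * (T - tau0)"
    using XK by (intro gps_sum_le[OF gps A(5)] tau0_nn Tge) (use R in \<open>auto simp: U_def\<close>)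
  finally have key: "real (card X) * L \<le> R * (T - tau0)" .
  define sb where "sb = real (\<Sum>x\<in>{g0..<h}. card (batch x))"
  have key2: "(sb + 1) * L / R \<le> T - tau0"
    using key R cardX by (simp add: sb_def pos_divide_le_eq mult.commute add.commute)
  have Dh2: "D h = tau0 + (sb + real (card (batch h))) * L / R" using Dh by (simp add: sb_def)
  have "D h - T \<le> (sb + real (card (batch h))) * L / R - (sb + 1) * L / R"
    using Dh2 key2 by linarith
  also have "\<dots> = (real (card (batch h)) - 1) * L / R" using R by (simp add: field_simps)
  also have "\<dots> \<le> (real M - 1) * L / R"
    using cardM A(4) R by (intro divide_right_mono mult_right_mono) auto
  finally show ?thesis by (simp add: D_def T_def S_def R_def)
qed

end
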